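(* For $n\ge 1$, let $\gamma(n)$ denote the number of partitions of $n$ having no part equal to $1$ and in which the largest part appears at least twice. Then for all $n\ge 26$, $$\gamma(n)\ \ge\ \gamma(n-1).$$
   Context: Partitions with no part equal to $1$ whose largest part occurs at least twice are called ground state non-unitary partitions; $\gamma(n)$ counts those of size $n$ (for $n\ge1$). *)

theory Defs
  imports Main "HOL-Library.Multiset"
begin

definition is_partition :: "nat multiset \<Rightarrow> nat \<Rightarrow> bool" where
  "is_partition p n \<longleftrightarrow> (\<forall>x \<in># p. 0 < x) \<and> sum_mset p = n"

definition gsnu_partition :: "nat multiset \<Rightarrow> nat \<Rightarrow> bool" where
  "gsnu_partition p n \<longleftrightarrow> is_partition p n \<and> 1 \<notin># p \<and> p \<noteq> {#} \<and>
     count p (Max_mset p) \<ge> 2"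

definition gamma :: "nat \<Rightarrow> nat" where
  "gamma n = card {p. gsnu_partition p n}"

end

theory Submission
  imports Defs
begin

fun cnt :: "nat \<Rightarrow> nat \<Rightarrow> nat \<Rightarrow> nat" where
 "cnt a b k = (if b = 0 \<or> b < a then (if k = 0 then 1 else 0)
    else cnt a (b - 1) k + (if b \<le> k then cnt a b (k - b) else 0))"
declare cnt.simps[simp del]

definition Rab :: "nat \<Rightarrow> nat \<Rightarrow> nat \<Rightarrow> nat multiset set" where
  "Rab a b k = {p. (\<forall>x\<in>#p. a \<le> x \<and> x \<le> b) \<and> sum_mset p = k}"

definition Ra :: "nat \<Rightarrow> nat \<Rightarrow> nat multiset set" where
  "Ra a n = {p. (\<forall>x\<in>#p. a \<le> x) \<and> sum_mset p = n}"

lemma Rab_cnt: "1 \<le> a \<Longrightarrow> finite (Rab a b k) \<and> card (Rab a b k) = cnt a b k"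
proof (induction a b k rule: cnt.induct)
  case (1 a b k)
  show ?case
  proof (cases "b = 0 \<or> b < a")
    case True
    have "Rab a b k = (if k = 0 then {{#}} else {})"
    proof -
      have "p = {#}" if "p \<in> Rab a b k" for p
      proof (rule ccontr)
        assume "p \<noteq> {#}"
        then obtain x where "x \<in># p" by (meson multiset_nonemptyE)
        with that True 1(3) show False unfolding Rab_def by fastforce
      qed
      then have "Rab a b k \<subseteq> {{#}}" by blast
      moreover have "{#} \<in> Rab a b k \<longleftrightarrow> k = 0" unfolding Rab_def by auto
      ultimately show ?thesis by auto
    qed
    then show ?thesis using True by (simp add: cnt.simps)
  next
    case False
    have IH1: "finite (Rab a (b - 1) k) \<and> card (Rab a (b - 1) k) = cnt a (b - 1) k"
      using 1 False by blast
    define B where "B = (if b \<le> k then (\<lambda>q. add_mset b q) ` Rab a b (k - b) else {})"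
    have fB: "finite B \<and> card B = (if b \<le> k then cnt a b (k - b) else 0)"
    proof (cases "b \<le> k")
      case True
      have IH2: "finite (Rab a b (k - b)) \<and> card (Rab a b (k - b)) = cnt a b (k - b)"
        using 1 False True by blast
      have "inj_on (\<lambda>q. add_mset b q) (Rab a b (k - b))" by (auto simp: inj_on_def)
      then show ?thesis using IH2 True unfolding B_def by (simp add: card_image)
    qed (simp add: B_def)
    have split: "Rab a b k = Rab a (b - 1) k \<union> B"
    proof (intro equalityI subsetI)
      fix p assume p: "p \<in> Rab a b k"
      show "p \<in> Rab a (b - 1) k \<union> B"
      proof (cases "b \<in># p")
        case True
        then have pe: "p = add_mset b (p - {#b#})" by simp
        have "sum_mset p = b + sum_mset (p - {#b#})" by (subst pe) simp
        then have "b \<le> k" "sum_mset (p - {#b#}) = k - b" using p unfolding Rab_def by auto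
        moreover have "p - {#b#} \<in> Rab a b (k - b)" using p calculation
          unfolding Rab_def by (auto dest: in_diffD)
        ultimately have "p \<in> B" unfolding B_def using pe by (metis image_eqI)
        then show ?thesis by blast
      next
        case False
        have "\<forall>x\<in>#p. a \<le> x \<and> x \<le> b - 1"
        proof
          fix x assume "x \<in># p"
          then have "x \<noteq> b" "a \<le> x" "x \<le> b" using False p unfolding Rab_def by auto
          then show "a \<le> x \<and> x \<le> b - 1" by linarith
        qed
        then have "p \<in> Rab a (b - 1) k" using p unfolding Rab_def by auto
        then show ?thesis by blast
      qed
    next
      fix p assume "p \<in> Rab a (b - 1) k \<union> B"
      then show "p \<in> Rab a b k"
      proof
        assume "p \<in> Rab a (b - 1) k"
        then show ?thesis unfolding Rab_def by fastforce
      next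
        assume "p \<in> B"
        then obtain q where "b \<le> k" "q \<in> Rab a b (k - b)" "p = add_mset b q"
          unfolding B_def by (auto split: if_splits)
        then show ?thesis unfolding Rab_def using False by auto
      qed
    qed
    have disj: "Rab a (b - 1) k \<inter> B = {}"
    proof (rule ccontr)
      assume "Rab a (b - 1) k \<inter> B \<noteq> {}"
      then obtain q where "add_mset b q \<in> Rab a (b - 1) k"
        unfolding B_def by (auto split: if_splits)
      then have "b \<le> b - 1" unfolding Rab_def by simp
      then show False using False by linarith
    qed
    show ?thesis using IH1 fB split disj False
      by (simp add: card_Un_disjoint cnt.simps[of a b k])
  qed
qed

lemma Ra_Rab: "Ra a n = Rab a n n"
  unfolding Ra_def Rab_def
  by (auto simp: sum_mset.remove)

lemma Ra_finite: "1 \<le> a \<Longrightarrow> finite (Ra a n)"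
  using Rab_cnt Ra_Rab by metis

lemma Ra_card: "1 \<le> a \<Longrightarrow> card (Ra a n) = cnt a n n"
  using Rab_cnt Ra_Rab by metis

definition Dr :: "nat \<Rightarrow> nat \<Rightarrow> nat multiset set" where
  "Dr a n = {p \<in> Ra a n. p \<noteq> {#} \<and> 2 \<le> count p (Max_mset p)}"

lemma max_props: "p \<noteq> {#} \<Longrightarrow> Max_mset p \<in># p \<and> (\<forall>y\<in>#p. y \<le> Max_mset p)"
  by (simp add: Max_in_mset)

lemma max_eq: "(x::nat) \<in># p \<Longrightarrow> (\<forall>y\<in>#p. y \<le> x) \<Longrightarrow> Max_mset p = x"
  by (simp add: Max_eqI)

lemma min_props: "p \<noteq> {#} \<Longrightarrow> Min_mset p \<in># p \<and> (\<forall>y\<in>#p. Min_mset p \<le> (y::nat))"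
  by (simp add: Min_in_mset)

lemma Dr_iff: "p \<in> Dr a n \<longleftrightarrow> p \<in> Ra a n \<and> (\<exists>x. 2 \<le> count p x \<and> (\<forall>y\<in>#p. y \<le> x))"
proof
  assume "p \<in> Dr a n"
  then show "p \<in> Ra a n \<and> (\<exists>x. 2 \<le> count p x \<and> (\<forall>y\<in>#p. y \<le> x))"
    unfolding Dr_def using max_props by blast
next
  assume A: "p \<in> Ra a n \<and> (\<exists>x. 2 \<le> count p x \<and> (\<forall>y\<in>#p. y \<le> x))"
  then obtain x where x: "2 \<le> count p x" "\<forall>y\<in>#p. y \<le> x" by blast
  then have "x \<in># p" using count_greater_zero_iff[of p x] by linarith
  then have "p \<noteq> {#}" "Max_mset p = x" using x max_eq by auto
  then show "p \<in> Dr a n" unfolding Dr_def using A x by auto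
qed

lemma gamma_Dr: "gamma n = card (Dr 2 n)"
proof -
  have "{p. gsnu_partition p n} = Dr 2 n"
  proof (intro equalityI subsetI)
    fix p assume "p \<in> {p. gsnu_partition p n}"
    then have g: "gsnu_partition p n" by simp
    have "\<forall>x\<in>#p. 2 \<le> x"
    proof
      fix x assume "x \<in># p"
      then have "x \<noteq> 1" "0 < x" using g unfolding gsnu_partition_def is_partition_def by auto
      then show "2 \<le> x" by linarith
    qed
    then show "p \<in> Dr 2 n" using g unfolding gsnu_partition_def is_partition_def Dr_def Ra_def
      by auto
  next
    fix p assume "p \<in> Dr 2 n"
    then show "p \<in> {p. gsnu_partition p n}" unfolding gsnu_partition_def is_partition_def Dr_def Ra_def
      by force
  qed
  then show ?thesis unfolding gamma_def by simp
qed

lemma remove_part: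
  assumes "1 \<le> a"
  shows "card (Ra a (n + a)) = card (Ra (Suc a) (n + a)) + card (Ra a n)"
proof -
  have split: "Ra a (n + a) = Ra (Suc a) (n + a) \<union> add_mset a ` Ra a n"
  proof (intro equalityI subsetI)
    fix p assume p: "p \<in> Ra a (n + a)"
    show "p \<in> Ra (Suc a) (n + a) \<union> add_mset a ` Ra a n"
    proof (cases "a \<in># p")
      case True
      then have pe: "p = add_mset a (p - {#a#})" by simp
      have "sum_mset p = a + sum_mset (p - {#a#})" by (subst pe) simp
      then have "p - {#a#} \<in> Ra a n" using p unfolding Ra_def by (auto dest: in_diffD)
      then show ?thesis using pe by blast
    next
      case False
      have "\<forall>x\<in>#p. Suc a \<le> x"
      proof
        fix x assume "x \<in># p"
        then have "x \<noteq> a" "a \<le> x" using False p unfolding Ra_def by auto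
        then show "Suc a \<le> x" by linarith
      qed
      then have "p \<in> Ra (Suc a) (n + a)" using p unfolding Ra_def by auto
      then show ?thesis by blast
    qed
  next
    fix p assume "p \<in> Ra (Suc a) (n + a) \<union> add_mset a ` Ra a n"
    then show "p \<in> Ra a (n + a)" unfolding Ra_def by auto
  qed
  have disj: "Ra (Suc a) (n + a) \<inter> add_mset a ` Ra a n = {}" unfolding Ra_def by auto
  have inj: "inj_on (add_mset a) (Ra a n)" by (auto simp: inj_on_def)
  show ?thesis using assms
    by (subst split, subst card_Un_disjoint)
       (auto simp: Ra_finite disj card_image[OF inj])
qed

definition upmax :: "nat multiset \<Rightarrow> nat multiset" where
  "upmax q = add_mset (Suc (Max_mset q)) (q - {#Max_mset q#})"

lemma unique_max:
  assumes "1 \<le> a" "a \<le> n"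
  shows "card (Ra a (Suc n)) = card (Dr a (Suc n)) + card (Ra a n)"
proof -
  define U where "U = Ra a (Suc n) - Dr a (Suc n)"
  have upm: "Max_mset (upmax q) = Suc (Max_mset q) \<and> count (upmax q) (Suc (Max_mset q)) = 1
     \<and> upmax q - {#Suc (Max_mset q)#} = q - {#Max_mset q#}" if "q \<noteq> {#}" for q
  proof -
    let ?M = "Max_mset q"
    have M: "?M \<in># q" "\<forall>y\<in>#q. y \<le> ?M" using max_props[OF that] by auto
    have "\<forall>y\<in># upmax q. y \<le> Suc ?M"
    proof
      fix y assume "y \<in># upmax q"
      then have "y = Suc ?M \<or> y \<in># q" unfolding upmax_def by (auto dest: in_diffD)
      then show "y \<le> Suc ?M" using M(2) le_SucI by blast
    qed
    then have "Max_mset (upmax q) = Suc ?M" by (intro max_eq) (auto simp: upmax_def)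
    moreover have "count q (Suc ?M) = 0" using M by (meson Suc_n_not_le_n not_in_iff)
    ultimately show ?thesis unfolding upmax_def by auto
  qed
  have inj: "inj_on upmax (Ra a n)"
  proof (rule inj_onI)
    fix q1 q2 assume q: "q1 \<in> Ra a n" "q2 \<in> Ra a n" "upmax q1 = upmax q2"
    have s1: "sum_mset q1 = n" and s2: "sum_mset q2 = n" using q unfolding Ra_def by auto
    have n0: "n \<noteq> 0" using assms by linarith
    have ne: "q1 \<noteq> {#}" "q2 \<noteq> {#}"
    proof -
      show "q1 \<noteq> {#}" proof assume "q1 = {#}" then show False using s1 n0 by simp qed
      show "q2 \<noteq> {#}" proof assume "q2 = {#}" then show False using s2 n0 by simp qed
    qed
    have Meq: "Max_mset q1 = Max_mset q2" using upm[OF ne(1)] upm[OF ne(2)] q(3) by simp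
    have d1: "q1 - {#Max_mset q1#} = upmax q1 - {#Suc (Max_mset q1)#}" using upm[OF ne(1)] by simp
    have d2: "q2 - {#Max_mset q2#} = upmax q2 - {#Suc (Max_mset q2)#}" using upm[OF ne(2)] by simp
    have dd: "q1 - {#Max_mset q1#} = q2 - {#Max_mset q1#}" using d1 d2 Meq q(3) by simp
    have m1: "Max_mset q1 \<in># q1" and m2: "Max_mset q1 \<in># q2"
      using max_props[OF ne(1)] max_props[OF ne(2)] Meq by auto
    show "q1 = q2" using insert_DiffM[OF m1] insert_DiffM[OF m2] dd by metis
  qed
  have img: "upmax ` Ra a n = U"
  proof (intro equalityI subsetI)
    fix p assume "p \<in> upmax ` Ra a n"
    then obtain q where q: "q \<in> Ra a n" "p = upmax q" by blast
    have ne: "q \<noteq> {#}" using q assms unfolding Ra_def by auto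
    let ?M = "Max_mset q"
    have M: "?M \<in># q" "\<forall>y\<in>#q. y \<le> ?M" using max_props[OF ne] by auto
    have "sum_mset q = ?M + sum_mset (q - {#?M#})" using sum_mset.remove[OF M(1)] .
    then have "p \<in> Ra a (Suc n)" using q M unfolding Ra_def upmax_def
      by (auto dest: in_diffD)
    moreover have "p \<notin> Dr a (Suc n)" using upm[OF ne] q unfolding Dr_def by auto
    ultimately show "p \<in> U" unfolding U_def by blast
  next
    fix p assume "p \<in> U"
    then have p: "p \<in> Ra a (Suc n)" "p \<notin> Dr a (Suc n)" unfolding U_def by auto
    have ne: "p \<noteq> {#}" using p unfolding Ra_def by auto
    define M where "M = Max_mset p"
    have M: "M \<in># p" "\<forall>y\<in>#p. y \<le> M" using max_props[OF ne] unfolding M_def by auto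
    have "\<not> 2 \<le> count p M" using p ne unfolding Dr_def M_def by auto
    moreover have "0 < count p M" using M(1) by simp
    ultimately have c1: "count p M = 1" by linarith
    define r where "r = p - {#M#}"
    have pr: "p = add_mset M r" unfolding r_def using M by simp
    have rM: "\<forall>y\<in>#r. y < M"
    proof
      fix y assume y: "y \<in># r"
      then have "y \<le> M" using M by (auto simp: r_def dest: in_diffD)
      moreover have "count r M = 0" using c1 unfolding r_def by simp
      then have "M \<notin># r" by (simp add: not_in_iff)
      then have "y \<noteq> M" using y by blast
      ultimately show "y < M" by linarith
    qed
    have "a \<le> M" using p M unfolding Ra_def by auto
    have "M \<noteq> a"
    proof
      assume "M = a"
      have "\<forall>y\<in>#r. False"
      proof
        fix y assume y: "y \<in># r"
        then have "y \<in># p" using pr by simp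
        then have "a \<le> y" using p unfolding Ra_def by auto
        moreover have "y < a" using rM y \<open>M = a\<close> by auto
        ultimately show False by linarith
      qed
      then have "r = {#}" by (meson multiset_nonemptyE)
      then have "sum_mset p = a" using pr \<open>M = a\<close> by simp
      then show False using p assms unfolding Ra_def by simp
    qed
    then have Ma: "Suc a \<le> M" using \<open>a \<le> M\<close> by linarith
    define q where "q = add_mset (M - 1) r"
    have qM: "Max_mset q = M - 1" unfolding q_def
      by (rule max_eq) (use rM in auto)
    have "sum_mset p = M + sum_mset r" using pr by simp
    then have "q \<in> Ra a n" using p Ma rM unfolding q_def Ra_def
      by (auto simp: pr)
    moreover have "upmax q = p" unfolding upmax_def qM M_def[symmetric] using Ma pr q_def by simp
    ultimately show "p \<in> upmax ` Ra a n" by blast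
  qed
  have "Ra a (Suc n) = Dr a (Suc n) \<union> U" unfolding U_def Dr_def by auto
  moreover have "Dr a (Suc n) \<inter> U = {}" unfolding U_def by auto
  moreover have "finite (Ra a (Suc n))" using Ra_finite assms by simp
  moreover have "finite (Dr a (Suc n))" "finite U"
    using calculation(3) unfolding Dr_def U_def by auto
  ultimately have "card (Ra a (Suc n)) = card (Dr a (Suc n)) + card U"
    using card_Un_disjoint by (metis (no_types))
  moreover have "card U = card (Ra a n)" using img inj card_image by fastforce
  ultimately show ?thesis by simp
qed

lemma all_eq_rep: "(\<forall>y\<in>#\<mu>. y = x) \<Longrightarrow> \<mu> = replicate_mset (size \<mu>) x"
  by (rule set_mset_subset_singletonD) auto

lemma size2_rep:
  assumes "size \<mu> = 2" "2 \<le> count \<mu> x"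
  shows "\<mu> = replicate_mset 2 x"
proof -
  have sub: "replicate_mset 2 x \<subseteq># \<mu>" using assms(2) by (simp add: subseteq_mset_def)
  have "size (\<mu> - replicate_mset 2 x) = 0" using size_Diff_submset[OF sub] assms(1) by simp
  then have "\<mu> - replicate_mset 2 x = {#}" by simp
  then show ?thesis using sub by (metis subset_mset.diff_add diff_zero add_0)
qed

lemma Dr_elim:
  assumes "\<mu> \<in> Dr a n"
  obtains x where "2 \<le> count \<mu> x" "\<forall>y\<in>#\<mu>. y \<le> x" "x \<in># \<mu>"
    "\<forall>y\<in>#\<mu>. a \<le> y" "sum_mset \<mu> = n"
proof -
  obtain x where x: "2 \<le> count \<mu> x" "\<forall>y\<in>#\<mu>. y \<le> x" using assms Dr_iff by blast
  then have "x \<in># \<mu>" using count_greater_zero_iff[of \<mu> x] by linarith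
  then show ?thesis using that x assms unfolding Dr_def Ra_def by blast
qed

lemma Dr_intro:
  assumes "2 \<le> count \<mu> x" "\<forall>y\<in>#\<mu>. y \<le> x" "\<forall>y\<in>#\<mu>. a \<le> y" "sum_mset \<mu> = n"
  shows "\<mu> \<in> Dr a n"
  using assms unfolding Dr_iff Ra_def by blast

definition fmap :: "nat \<Rightarrow> nat multiset \<Rightarrow> nat multiset + nat multiset" where
  "fmap u \<mu> = (if size \<mu> = 2 then Inl (add_mset (Suc u div 2 - 3) (add_mset (Suc u div 2 - 3) {#7#}))
     else if 5 \<le> Min_mset \<mu> then Inr (add_mset (Min_mset \<mu> - 1) (\<mu> - {#Min_mset \<mu>#}))
     else if 5 \<le> Max_mset \<mu> then Inl (add_mset 5 (\<mu> - {#4#}))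
     else Inl (replicate_mset 3 7 + replicate_mset (Suc u div 4 - 5) 4))"

lemma case_a:
  assumes "\<mu> \<in> Dr 4 (Suc u)" "size \<mu> = 2" "30 \<le> u"
  shows "\<mu> = replicate_mset 2 (Suc u div 2)"
    "add_mset (Suc u div 2 - 3) (add_mset (Suc u div 2 - 3) {#7#}) \<in> Dr 4 (Suc (Suc u))"
proof -
  obtain x where x: "2 \<le> count \<mu> x" "\<forall>y\<in>#\<mu>. y \<le> x" "x \<in># \<mu>"
    "\<forall>y\<in>#\<mu>. 4 \<le> y" "sum_mset \<mu> = Suc u" using Dr_elim[OF assms(1)] by blast
  have mu: "\<mu> = replicate_mset 2 x" using size2_rep[OF assms(2) x(1)] .
  then have "sum_mset \<mu> = 2 * x" by (simp add: sum_mset_replicate_mset)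
  then have xe2: "Suc u = 2 * x" using x(5) by simp
  then have xe: "Suc u div 2 = x" by simp
  then show "\<mu> = replicate_mset 2 (Suc u div 2)" using mu by simp
  have x16: "16 \<le> x" using xe2 assms(3) by linarith
  show "add_mset (Suc u div 2 - 3) (add_mset (Suc u div 2 - 3) {#7#}) \<in> Dr 4 (Suc (Suc u))"
    unfolding xe
  proof (rule Dr_intro[where x = "x - 3"])
    show "sum_mset (add_mset (x - 3) (add_mset (x - 3) {#7#})) = Suc (Suc u)"
      using xe2 x16 by simp
    show "2 \<le> count (add_mset (x - 3) (add_mset (x - 3) {#7#})) (x - 3)" by simp
    show "\<forall>y\<in>#add_mset (x - 3) (add_mset (x - 3) {#7#}). y \<le> x - 3" using x16 by simp
    show "\<forall>y\<in>#add_mset (x - 3) (add_mset (x - 3) {#7#}). 4 \<le> y" using x16 by simp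
  qed
qed

lemma case_b:
  assumes "\<mu> \<in> Dr 4 (Suc u)" "size \<mu> \<noteq> 2" "5 \<le> Min_mset \<mu>"
  shows "add_mset (Min_mset \<mu> - 1) (\<mu> - {#Min_mset \<mu>#}) \<in> Dr 4 u"
proof -
  obtain x where x: "2 \<le> count \<mu> x" "\<forall>y\<in>#\<mu>. y \<le> x" "x \<in># \<mu>"
    "\<forall>y\<in>#\<mu>. 4 \<le> y" "sum_mset \<mu> = Suc u" using Dr_elim[OF assms(1)] by blast
  have ne: "\<mu> \<noteq> {#}" using x(3) by auto
  define s where "s = Min_mset \<mu>"
  have s: "s \<in># \<mu>" "\<forall>y\<in>#\<mu>. s \<le> y" using min_props[OF ne] unfolding s_def by auto
  have s5: "5 \<le> s" using assms(3) unfolding s_def .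
  define r where "r = \<mu> - {#s#}"
  have mr: "\<mu> = add_mset s r" unfolding r_def using s(1) by simp
  have "sum_mset r + s = sum_mset \<mu>" using mr by simp
  then have sumr: "sum_mset r + s = Suc u" using x(5) by simp
  have rin: "\<forall>y\<in>#r. y \<in># \<mu>" using mr by simp
  show ?thesis unfolding s_def[symmetric] r_def[symmetric]
  proof (cases "s = x")
    case True
    have "\<forall>y\<in>#\<mu>. y = x"
    proof
      fix y assume "y \<in># \<mu>"
      then have "s \<le> y" "y \<le> x" using s(2) x(2) by auto
      then show "y = x" using True by linarith
    qed
    then have "\<mu> = replicate_mset (size \<mu>) x" by (rule all_eq_rep)
    then have "count \<mu> x = count (replicate_mset (size \<mu>) x) x" by (rule arg_cong)
    then have cnt: "count \<mu> x = size \<mu>" by simp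
    have "size \<mu> \<ge> 2" using x(1) cnt by simp
    then have "size \<mu> \<ge> 3" using assms(2) by linarith
    then have "2 \<le> count r x" using cnt mr True by simp
    moreover have "count r x \<le> count (add_mset (s - 1) r) x" by simp
    ultimately have "2 \<le> count (add_mset (s - 1) r) x" by linarith
    moreover have "\<forall>y\<in># add_mset (s - 1) r. y \<le> x" using rin x(2) True by auto
    moreover have "\<forall>y\<in># add_mset (s - 1) r. 4 \<le> y" using rin x(4) s5 by auto
    moreover have "sum_mset (add_mset (s - 1) r) = u" using sumr s5 by simp
    ultimately show "add_mset (s - 1) r \<in> Dr 4 u" by (rule Dr_intro)
  next
    case False
    have "s \<le> x" using s(2) x(3) by blast
    then have "count r x = count \<mu> x" using mr False by simp
    moreover have "count r x \<le> count (add_mset (s - 1) r) x" by simp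
    ultimately have "2 \<le> count (add_mset (s - 1) r) x" using x(1) by linarith
    moreover have "\<forall>y\<in># add_mset (s - 1) r. y \<le> x" using rin x(2) \<open>s \<le> x\<close> by auto
    moreover have "\<forall>y\<in># add_mset (s - 1) r. 4 \<le> y" using rin x(4) s5 by auto
    moreover have "sum_mset (add_mset (s - 1) r) = u" using sumr s5 by simp
    ultimately show "add_mset (s - 1) r \<in> Dr 4 u" by (rule Dr_intro)
  qed
qed

lemma case_c:
  assumes "\<mu> \<in> Dr 4 (Suc u)" "\<not> 5 \<le> Min_mset \<mu>" "5 \<le> Max_mset \<mu>"
  shows "add_mset 5 (\<mu> - {#4#}) \<in> Dr 4 (Suc (Suc u))" "4 \<in># \<mu>"
proof -
  obtain x where x: "2 \<le> count \<mu> x" "\<forall>y\<in>#\<mu>. y \<le> x" "x \<in># \<mu>"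
    "\<forall>y\<in>#\<mu>. 4 \<le> y" "sum_mset \<mu> = Suc u" using Dr_elim[OF assms(1)] by blast
  have ne: "\<mu> \<noteq> {#}" using x(3) by auto
  have "Max_mset \<mu> = x" using max_eq x(2,3) by blast
  then have x5: "5 \<le> x" using assms(3) by simp
  have "Min_mset \<mu> \<in># \<mu>" using min_props[OF ne] by blast
  moreover have "4 \<le> Min_mset \<mu>" using calculation x(4) by blast
  moreover have "Min_mset \<mu> = 4" using assms(2) calculation(2) by linarith
  ultimately show m4: "4 \<in># \<mu>" by simp
  define r where "r = \<mu> - {#4#}"
  have mr: "\<mu> = add_mset 4 r" unfolding r_def using m4 by simp
  have "sum_mset r + 4 = sum_mset \<mu>" using mr by simp
  then have sumr: "sum_mset r + 4 = Suc u" using x(5) by simp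
  have rin: "\<forall>y\<in>#r. y \<in># \<mu>" using mr by simp
  have "count r x = count \<mu> x" using mr x5 by simp
  moreover have "count r x \<le> count (add_mset 5 r) x" by simp
  ultimately have "2 \<le> count (add_mset 5 r) x" using x(1) by linarith
  moreover have "\<forall>y\<in># add_mset 5 r. y \<le> x" using rin x(2) x5 by auto
  moreover have "\<forall>y\<in># add_mset 5 r. 4 \<le> y" using rin x(4) by auto
  moreover have "sum_mset (add_mset 5 r) = Suc (Suc u)" using sumr by simp
  ultimately show "add_mset 5 (\<mu> - {#4#}) \<in> Dr 4 (Suc (Suc u))" unfolding r_def[symmetric]
    by (rule Dr_intro)
qed

lemma case_d:
  assumes "\<mu> \<in> Dr 4 (Suc u)" "\<not> 5 \<le> Max_mset \<mu>" "30 \<le> u"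
  shows "\<mu> = replicate_mset (Suc u div 4) 4"
    "replicate_mset 3 7 + replicate_mset (Suc u div 4 - 5) 4 \<in> Dr 4 (Suc (Suc u))"
proof -
  obtain x where x: "2 \<le> count \<mu> x" "\<forall>y\<in>#\<mu>. y \<le> x" "x \<in># \<mu>"
    "\<forall>y\<in>#\<mu>. 4 \<le> y" "sum_mset \<mu> = Suc u" using Dr_elim[OF assms(1)] by blast
  have "Max_mset \<mu> = x" using max_eq x(2,3) by blast
  then have "x \<le> 4" using assms(2) by simp
  have "\<forall>y\<in>#\<mu>. y = 4"
  proof
    fix y assume "y \<in># \<mu>"
    then have "4 \<le> y" "y \<le> x" using x(2,4) by auto
    then show "y = 4" using \<open>x \<le> 4\<close> by linarith
  qed
  then have mu: "\<mu> = replicate_mset (size \<mu>) 4" by (rule all_eq_rep)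
  then have "sum_mset \<mu> = sum_mset (replicate_mset (size \<mu>) 4)" by (rule arg_cong)
  then have "sum_mset \<mu> = size \<mu> * 4" by (simp add: sum_mset_replicate_mset)
  then have l: "size \<mu> = Suc u div 4" "Suc u = 4 * size \<mu>" using x(5) by auto
  then show "\<mu> = replicate_mset (Suc u div 4) 4" using mu by simp
  have l8: "8 \<le> Suc u div 4" using l assms(3) by linarith
  show "replicate_mset 3 7 + replicate_mset (Suc u div 4 - 5) 4 \<in> Dr 4 (Suc (Suc u))"
  proof (rule Dr_intro[where x = 7])
    show "sum_mset (replicate_mset 3 7 + replicate_mset (Suc u div 4 - 5) 4) = Suc (Suc u)"
      using l l8 by (simp add: sum_mset_replicate_mset)
  qed auto
qed

lemma min_eq: "(x::nat) \<in># p \<Longrightarrow> (\<forall>y\<in>#p. x \<le> y) \<Longrightarrow> Min_mset p = x"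
  by (simp add: Min_eqI)

definition ginv :: "nat \<Rightarrow> nat multiset + nat multiset \<Rightarrow> nat multiset" where
  "ginv u z = (case z of
     Inl \<nu> \<Rightarrow> (if \<nu> = add_mset (Suc u div 2 - 3) (add_mset (Suc u div 2 - 3) {#7#})
              then replicate_mset 2 (Suc u div 2)
              else if \<nu> = replicate_mset 3 7 + replicate_mset (Suc u div 4 - 5) 4
              then replicate_mset (Suc u div 4) 4
              else add_mset 4 (\<nu> - {#5#}))
   | Inr \<nu> \<Rightarrow> add_mset (Suc (Min_mset \<nu>)) (\<nu> - {#Min_mset \<nu>#}))"

lemma ginv_fmap:
  assumes mu: "\<mu> \<in> Dr 4 (Suc u)" and u: "30 \<le> u"
  shows "ginv u (fmap u \<mu>) = \<mu>"
proof -
  define m where "m = Suc u div 2"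
  define l where "l = Suc u div 4"
  define Sa where "Sa = add_mset (m - 3) (add_mset (m - 3) {#7#})"
  define Sd where "Sd = replicate_mset 3 (7::nat) + replicate_mset (l - 5) 4"
  have m15: "15 \<le> m" unfolding m_def using u by linarith
  have Sa5: "5 \<notin># Sa" unfolding Sa_def using m15 by auto
  have Sd5: "5 \<notin># Sd" unfolding Sd_def by (auto split: if_splits)
  have "count Sa 7 = 1" unfolding Sa_def using m15 by auto
  moreover have "count Sd 7 = 3" unfolding Sd_def by simp
  ultimately have SaSd: "Sd \<noteq> Sa" by auto
  have g: "ginv u (Inl \<nu>) = (if \<nu> = Sa then replicate_mset 2 m else if \<nu> = Sd then replicate_mset l 4
      else add_mset 4 (\<nu> - {#5#}))" for \<nu>
    unfolding ginv_def Sa_def Sd_def m_def l_def by simp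
  have f: "fmap u \<mu> = (if size \<mu> = 2 then Inl Sa
     else if 5 \<le> Min_mset \<mu> then Inr (add_mset (Min_mset \<mu> - 1) (\<mu> - {#Min_mset \<mu>#}))
     else if 5 \<le> Max_mset \<mu> then Inl (add_mset 5 (\<mu> - {#4#}))
     else Inl Sd)"
    unfolding fmap_def Sa_def Sd_def m_def l_def by simp
  show ?thesis
  proof (cases "size \<mu> = 2")
    case True
    then show ?thesis using case_a(1)[OF mu True u] f g unfolding m_def by simp
  next
    case n2: False
    show ?thesis
    proof (cases "5 \<le> Min_mset \<mu>")
      case True
      have ne: "\<mu> \<noteq> {#}" using mu unfolding Dr_def by auto
      define s where "s = Min_mset \<mu>"
      have s: "s \<in># \<mu>" "\<forall>y\<in>#\<mu>. s \<le> y" using min_props[OF ne] unfolding s_def by auto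
      have s5: "5 \<le> s" using True unfolding s_def .
      define \<nu> where "\<nu> = add_mset (s - 1) (\<mu> - {#s#})"
      have "\<forall>y\<in>#\<nu>. s - 1 \<le> y"
      proof
        fix y assume "y \<in># \<nu>"
        then have "y = s - 1 \<or> y \<in># \<mu>" unfolding \<nu>_def by (auto dest: in_diffD)
        then show "s - 1 \<le> y" using s(2) by auto
      qed
      then have mn: "Min_mset \<nu> = s - 1" by (intro min_eq) (auto simp: \<nu>_def)
      have "ginv u (Inr \<nu>) = add_mset (Suc (Min_mset \<nu>)) (\<nu> - {#Min_mset \<nu>#})"
        by (simp add: ginv_def)
      also have "\<dots> = add_mset (Suc (s - 1)) (\<nu> - {#s - 1#})" unfolding mn ..
      also have "\<dots> = add_mset s (\<mu> - {#s#})" using s5 by (simp add: \<nu>_def)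
      also have "\<dots> = \<mu>" using s(1) by simp
      finally show ?thesis using f n2 True unfolding s_def[symmetric] \<nu>_def[symmetric] by simp
    next
      case nm: False
      show ?thesis
      proof (cases "5 \<le> Max_mset \<mu>")
        case True
        have m4: "4 \<in># \<mu>" using case_c(2)[OF mu nm True] .
        define \<nu> where "\<nu> = add_mset 5 (\<mu> - {#4#})"
        have "5 \<in># \<nu>" unfolding \<nu>_def by simp
        then have "\<nu> \<noteq> Sa" "\<nu> \<noteq> Sd" using Sa5 Sd5 by auto
        then have "ginv u (Inl \<nu>) = add_mset 4 (\<mu> - {#4#})" using g by (simp add: \<nu>_def)
        also have "\<dots> = \<mu>" using m4 by simp
        finally show ?thesis using f n2 nm True unfolding \<nu>_def[symmetric] by simp
      next
        case False
        have "\<mu> = replicate_mset l 4" using case_d(1)[OF mu False u] unfolding l_def .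
        then show ?thesis using f n2 nm False g SaSd by simp
      qed
    qed
  qed
qed

lemma fmap_into:
  assumes mu: "\<mu> \<in> Dr 4 (Suc u)" and u: "30 \<le> u"
  shows "fmap u \<mu> \<in> Dr 4 (Suc (Suc u)) <+> Dr 4 u"
proof (cases "size \<mu> = 2")
  case True
  then show ?thesis using case_a(2)[OF mu True u] unfolding fmap_def by auto
next
  case n2: False
  show ?thesis
  proof (cases "5 \<le> Min_mset \<mu>")
    case True
    then show ?thesis using case_b[OF mu n2 True] n2 unfolding fmap_def by auto
  next
    case nm: False
    show ?thesis
    proof (cases "5 \<le> Max_mset \<mu>")
      case True
      then show ?thesis using case_c(1)[OF mu nm True] n2 nm unfolding fmap_def by auto
    next
      case False
      then show ?thesis using case_d(2)[OF mu False u] n2 nm unfolding fmap_def by auto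
    qed
  qed
qed

lemma Dr_finite: "1 \<le> a \<Longrightarrow> finite (Dr a n)"
  using Ra_finite[of a n] unfolding Dr_def by auto

lemma inj_ineq:
  assumes u: "30 \<le> u"
  shows "card (Dr 4 (Suc u)) \<le> card (Dr 4 (Suc (Suc u))) + card (Dr 4 u)"
proof -
  have inj: "inj_on (fmap u) (Dr 4 (Suc u))"
    by (rule inj_on_inverseI[where g = "ginv u"]) (rule ginv_fmap[OF _ u])
  have sub: "fmap u ` Dr 4 (Suc u) \<subseteq> Dr 4 (Suc (Suc u)) <+> Dr 4 u"
    using fmap_into[OF _ u] by blast
  have fin: "finite (Dr 4 (Suc (Suc u)) <+> Dr 4 u)" using Dr_finite by simp
  have "card (Dr 4 (Suc u)) = card (fmap u ` Dr 4 (Suc u))" using card_image[OF inj] by simp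
  also have "\<dots> \<le> card (Dr 4 (Suc (Suc u)) <+> Dr 4 u)" using card_mono[OF fin sub] .
  also have "\<dots> = card (Dr 4 (Suc (Suc u))) + card (Dr 4 u)" by (rule card_Plus[OF Dr_finite Dr_finite]) simp_all
  finally show ?thesis .
qed

lemma gval: "2 \<le> k \<Longrightarrow> gamma (Suc k) = cnt 2 (Suc k) (Suc k) - cnt 2 k k"
  using unique_max[of 2 k] gamma_Dr[of "Suc k"] Ra_card[of 2] by simp

lemma c24: "cnt 2 24 24 = 320" by code_simp
lemma c25: "cnt 2 25 25 = 383" by code_simp
lemma c26: "cnt 2 26 26 = 478" by code_simp
lemma c27: "cnt 2 27 27 = 574" by code_simp
lemma c28: "cnt 2 28 28 = 708" by code_simp
lemma c29: "cnt 2 29 29 = 847" by code_simp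
lemma c30: "cnt 2 30 30 = 1039" by code_simp
lemma c31: "cnt 2 31 31 = 1238" by code_simp

lemma g25: "gamma 25 = 63" using gval[of 24] c24 c25 by simp
lemma g26: "gamma 26 = 95" using gval[of 25] c25 c26 by simp
lemma g27: "gamma 27 = 96" using gval[of 26] c26 c27 by simp
lemma g28: "gamma 28 = 134" using gval[of 27] c27 c28 by simp
lemma g29: "gamma 29 = 139" using gval[of 28] c28 c29 by simp
lemma g30: "gamma 30 = 192" using gval[of 29] c29 c30 by simp
lemma g31: "gamma 31 = 199" using gval[of 30] c30 c31 by simp

definition rr :: "nat \<Rightarrow> nat \<Rightarrow> int" where "rr a n = int (card (Ra a n))"
definition DD :: "nat \<Rightarrow> int" where "DD n = int (card (Dr 4 n))"
definition GG :: "nat \<Rightarrow> int" where "GG n = int (gamma n)"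

lemma fA: "rr 2 (k + 2) = rr 3 (k + 2) + rr 2 k"
  using remove_part[of 2 k] unfolding rr_def by (simp add: numeral_eq_Suc)
lemma fB: "rr 3 (k + 3) = rr 4 (k + 3) + rr 3 k"
  using remove_part[of 3 k] unfolding rr_def by (simp add: numeral_eq_Suc)
lemma fC: "4 \<le> k \<Longrightarrow> rr 4 (k + 1) = DD (k + 1) + rr 4 k"
  using unique_max[of 4 k] unfolding rr_def DD_def by simp
lemma fE: "2 \<le> k \<Longrightarrow> rr 2 (k + 1) = GG (k + 1) + rr 2 k"
  using unique_max[of 2 k] gamma_Dr[of "Suc k"] unfolding rr_def GG_def by simp
lemma fI: "30 \<le> u \<Longrightarrow> DD (u + 1) \<le> DD (u + 2) + DD u"
  using inj_ineq[of u] unfolding DD_def by simp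

lemma step:
  "GG (k + 32) - GG (k + 31) = GG (k + 26) - GG (k + 25) + DD (k + 32) - DD (k + 31) + DD (k + 30)"
proof -
  have e: "rr 2 (k + 32) = GG (k + 32) + rr 2 (k + 31)" "rr 2 (k + 31) = GG (k + 31) + rr 2 (k + 30)"
    "rr 2 (k + 26) = GG (k + 26) + rr 2 (k + 25)" "rr 2 (k + 25) = GG (k + 25) + rr 2 (k + 24)"
    using fE[of "k + 31"] fE[of "k + 30"] fE[of "k + 25"] fE[of "k + 24"] by (simp_all add: ac_simps)
  have c: "rr 4 (k + 32) = DD (k + 32) + rr 4 (k + 31)" "rr 4 (k + 31) = DD (k + 31) + rr 4 (k + 30)"
    "rr 4 (k + 30) = DD (k + 30) + rr 4 (k + 29)"
    using fC[of "k + 31"] fC[of "k + 30"] fC[of "k + 29"] by (simp_all add: ac_simps)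
  have b: "rr 3 (k + 32) = rr 4 (k + 32) + rr 3 (k + 29)" "rr 3 (k + 31) = rr 4 (k + 31) + rr 3 (k + 28)"
    "rr 3 (k + 30) = rr 4 (k + 30) + rr 3 (k + 27)" "rr 3 (k + 29) = rr 4 (k + 29) + rr 3 (k + 26)"
    using fB[of "k + 29"] fB[of "k + 28"] fB[of "k + 27"] fB[of "k + 26"]
    by (simp_all add: ac_simps)
  have a: "rr 2 (k + 32) = rr 3 (k + 32) + rr 2 (k + 30)" "rr 2 (k + 31) = rr 3 (k + 31) + rr 2 (k + 29)"
    "rr 2 (k + 30) = rr 3 (k + 30) + rr 2 (k + 28)" "rr 2 (k + 29) = rr 3 (k + 29) + rr 2 (k + 27)"
    "rr 2 (k + 28) = rr 3 (k + 28) + rr 2 (k + 26)" "rr 2 (k + 27) = rr 3 (k + 27) + rr 2 (k + 25)"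
    "rr 2 (k + 26) = rr 3 (k + 26) + rr 2 (k + 24)"
    using fA[of "k + 30"] fA[of "k + 29"] fA[of "k + 28"] fA[of "k + 27"] fA[of "k + 26"]
      fA[of "k + 25"] fA[of "k + 24"]
    by (simp_all add: ac_simps)
  show ?thesis using a b c e by linarith
qed

lemma mainH: "26 \<le> n \<Longrightarrow> GG (n - 1) \<le> GG n"
proof (induction n rule: less_induct)
  case (less n)
  show ?case
  proof (cases "n \<le> 31")
    case True
    then have "n = 26 \<or> n = 27 \<or> n = 28 \<or> n = 29 \<or> n = 30 \<or> n = 31" using less.prems by linarith
    then show ?thesis unfolding GG_def using g25 g26 g27 g28 g29 g30 g31 by auto
  next
    case False
    define k where "k = n - 32"
    have k: "n = k + 32" using False unfolding k_def by linarith
    have IH: "GG (k + 25) \<le> GG (k + 26)"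
      using less.IH[of "k + 26"] k by (simp add: ac_simps)
    have "DD (k + 31) \<le> DD (k + 32) + DD (k + 30)" using fI[of "k + 30"] by (simp add: ac_simps)
    moreover have n1: "n - 1 = k + 31" using k by simp
    ultimately have "GG (k + 31) \<le> GG (k + 32)" using step[of k] IH by linarith
    then show ?thesis using n1 k by (simp add: ac_simps)
  qed
qed

theorem proposition2:
  fixes n :: nat
  assumes "n \<ge> 26"
  shows "gamma n \<ge> gamma (n - 1)"
  using mainH[OF assms] unfolding GG_def by simp

end
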